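(* Let $\phi:\mathbb{R}\to\mathbb{R}$ be a differentiable elementwise nonlinearity with $\frac{\phi(z)}{\phi'(z)}<\infty$ for all $z\in\mathbb{R}$. Let $f(z)=W_1\phi(W_2 z)$ with $W_1\in\mathbb{R}^{k_0\times k}$, $W_2\in\mathbb{R}^{k\times k_0}$, and let $x\in\mathbb{R}^{k_0}$ with $\|x\|_2=1$. Initialize $W_1^{(0)}=x{u^{(0)}}^T$, $W_2^{(0)}=v^{(0)}x^T$ with $u^{(0)},v^{(0)}\in\mathbb{R}^k$ each having all entries equal, and train by gradient descent with learning rate $\gamma\to0$ on $\mathcal{L}(x,f)=\frac12\|x-f(x)\|_2^2$, yielding $W_1^{(\infty)}=xu^T$, $W_2^{(\infty)}=vx^T$ with $u_i=u_j$, $v_i=v_j$ for all $i,j$, $u_i\phi(v_i)=1/k$ and $\frac{u_i^2-{u_i^{(0)}}^2}{2}=\int_{v_i^{(0)}}^{v_i}\frac{\phi(z)}{\phi'(z)}dz$. Then for the trained network $f(z)=W_1^{(\infty)}\phi(W_2^{(\infty)}z)$, $$\lambda_1(\mathbf{J}(f(x)))=\frac{\phi'(v_i)v_i}{\phi(v_i)}$$ (for any $i\in[k]$).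
   Context: $\phi$ is applied coordinatewise. $\mathbf{J}(f(x))$ denotes the Jacobian matrix of $f$ evaluated at $x$, and $\lambda_1$ denotes its top eigenvalue (eigenvalue of largest absolute value). Gradient descent with learning rate $\gamma$ updates each weight matrix by $W\leftarrow W-\gamma\nabla_W\mathcal{L}$; the superscript $(\infty)$ denotes the weights at the end of training in the limit $\gamma\to0$ (gradient flow). *)

theory Defs
  imports "HOL-Analysis.Analysis"
begin

definition is_eigenvalue :: "real ^'n ^'n \<Rightarrow> complex \<Rightarrow> bool" where
  "is_eigenvalue A \<mu> \<longleftrightarrow>
     (\<exists>w :: complex ^'n. w \<noteq> 0 \<and>
        (\<chi> i. \<Sum>j\<in>UNIV. complex_of_real (A $ i $ j) * w $ j) = (\<chi> i. \<mu> * w $ i))"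

definition is_top_eigenvalue :: "real ^'n ^'n \<Rightarrow> complex \<Rightarrow> bool" where
  "is_top_eigenvalue A lam \<longleftrightarrow>
     is_eigenvalue A lam \<and> (\<forall>\<mu>. is_eigenvalue A \<mu> \<longrightarrow> cmod \<mu> \<le> cmod lam)"

definition net :: "(real \<Rightarrow> real) \<Rightarrow> real ^'k ^'k0 \<Rightarrow> real ^'k0 ^'k \<Rightarrow> real ^'k0 \<Rightarrow> real ^'k0" where
  "net \<phi> W1 W2 z = W1 *v (\<chi> i. \<phi> ((W2 *v z) $ i))"

end

theory Submission
  imports Defs
begin

lemma deriv_lemma:
  fixes \<phi> :: "real \<Rightarrow> real" and x :: "real^'n"
  assumes "\<And>z. \<phi> differentiable (at z)"
  shows "((\<lambda>z. (K * \<phi> (w * (x \<bullet> z))) *\<^sub>R x) has_derivative (\<lambda>h. (K * (deriv \<phi> (w * (x \<bullet> y)) * (w * (x \<bullet> h)))) *\<^sub>R x)) (at y)"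
proof -
  have d: "(\<phi> has_real_derivative deriv \<phi> t) (at t)" for t
    using assms DERIV_deriv_iff_real_differentiable by blast
  have i: "((\<lambda>z. w * (x \<bullet> z)) has_derivative (\<lambda>h. w * (x \<bullet> h))) (at y)"
    by (intro derivative_eq_intros) auto
  have "((\<lambda>z. \<phi> (w * (x \<bullet> z))) has_derivative (\<lambda>h. deriv \<phi> (w * (x \<bullet> y)) * (w * (x \<bullet> h)))) (at y)"
    using DERIV_compose_FDERIV[OF d i] by (simp add: mult.commute)
  then show ?thesis
    by (intro derivative_eq_intros) auto
qed

lemma rank1_top:
  fixes x :: "real^'n" and D :: real
  assumes xx: "(\<Sum>b\<in>UNIV. x $ b * x $ b) = 1"
  shows "is_top_eigenvalue (\<chi> a b. D * x $ a * x $ b) (complex_of_real D)"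
proof -
  have xxc: "(\<Sum>b\<in>UNIV. complex_of_real (x $ b) * complex_of_real (x $ b)) = 1"
    using arg_cong[OF xx, of complex_of_real] by simp
  have row: "(\<Sum>j\<in>UNIV. complex_of_real ((\<chi> a b. D * x $ a * x $ b) $ i $ j) * w $ j)
      = complex_of_real (D * x $ i) * (\<Sum>j\<in>UNIV. complex_of_real (x $ j) * w $ j)" for i and w :: "complex^'n"
    by (simp add: sum_distrib_left mult.assoc)
  have ev: "is_eigenvalue (\<chi> a b. D * x $ a * x $ b) (complex_of_real D)"
    unfolding is_eigenvalue_def
  proof (intro exI conjI)
    show "(\<chi> a. complex_of_real (x $ a)) \<noteq> 0"
    proof
      assume "(\<chi> a. complex_of_real (x $ a)) = 0"
      then have "\<And>a. x $ a = 0" by (metis vec_lambda_beta zero_index of_real_eq_0_iff)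
      then show False using xx by simp
    qed
    show "(\<chi> i. \<Sum>j\<in>UNIV. complex_of_real ((\<chi> a b. D * x $ a * x $ b) $ i $ j) * (\<chi> a. complex_of_real (x $ a)) $ j)
        = (\<chi> i. complex_of_real D * (\<chi> a. complex_of_real (x $ a)) $ i)"
      unfolding row by (simp add: xxc vec_eq_iff)
  qed
  have "cmod \<mu> \<le> cmod (complex_of_real D)" if "is_eigenvalue (\<chi> a b. D * x $ a * x $ b) \<mu>" for \<mu>
  proof (cases "\<mu> = 0")
    case True then show ?thesis by simp
  next
    case False
    from that obtain w :: "complex^'n" where w0: "w \<noteq> 0" and eq:
      "(\<chi> i. \<Sum>j\<in>UNIV. complex_of_real ((\<chi> a b. D * x $ a * x $ b) $ i $ j) * w $ j) = (\<chi> i. \<mu> * w $ i)"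
      unfolding is_eigenvalue_def by blast
    define s where "s = (\<Sum>j\<in>UNIV. complex_of_real (x $ j) * w $ j)"
    have eqi: "complex_of_real (D * x $ i) * s = \<mu> * w $ i" for i
      using eq unfolding row s_def vec_eq_iff by simp
    have wi: "w $ i = complex_of_real (D * x $ i) * s / \<mu>" for i
      using eqi[of i] False by (simp add: field_simps)
    have "s = (\<Sum>j\<in>UNIV. complex_of_real (x $ j) * w $ j)" by (simp add: s_def)
    also have "\<dots> = (\<Sum>j\<in>UNIV. complex_of_real (x $ j) * (complex_of_real (D * x $ j) * s / \<mu>))"
      by (rule sum.cong[OF refl]) (rule arg_cong[OF wi])
    also have "\<dots> = complex_of_real D * s / \<mu> * (\<Sum>j\<in>UNIV. complex_of_real (x $ j) * complex_of_real (x $ j))"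
      by (simp add: sum_distrib_left sum_divide_distrib mult_ac)
    finally have sD: "s = complex_of_real D * s / \<mu>" using xxc by simp
    have "s \<noteq> 0"
    proof
      assume "s = 0"
      then have "w $ i = 0" for i using wi by simp
      then show False using w0 by (simp add: vec_eq_iff)
    qed
    then have "\<mu> = complex_of_real D" using sD False by (simp add: field_simps)
    then show ?thesis by simp
  qed
  then show ?thesis using ev unfolding is_top_eigenvalue_def by blast
qed

theorem theorem2:
  fixes \<phi> :: "real \<Rightarrow> real"
    and x :: "real ^'k0"
    and u v u0 v0 :: "real ^'k"
  assumes phi_diff: "\<And>z. \<phi> differentiable (at z)"
    and ratio_finite: "\<And>z. deriv \<phi> z \<noteq> 0"
    and x_unit: "norm x = 1"
    and u0_const: "\<And>i j. u0 $ i = u0 $ j"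
    and v0_const: "\<And>i j. v0 $ i = v0 $ j"
    and u_const: "\<And>i j. u $ i = u $ j"
    and v_const: "\<And>i j. v $ i = v $ j"
    and balance: "\<And>i. u $ i * \<phi> (v $ i) = 1 / real CARD('k)"
    and conserved: "\<And>i. (u $ i ^ 2 - u0 $ i ^ 2) / 2
                          = (LBINT z = ereal (v0 $ i) .. ereal (v $ i). \<phi> z / deriv \<phi> z)"
  shows "\<forall>i. is_top_eigenvalue
              (jacobian (net \<phi> (\<chi> a j. x $ a * u $ j) (\<chi> j a. v $ j * x $ a)) (at x))
              (complex_of_real (deriv \<phi> (v $ i) * v $ i / \<phi> (v $ i)))"
proof
  fix i
  define c where "c = u $ i"
  define w where "w = v $ i"
  define K where "K = real CARD('k) * c"
  have uc: "u $ j = c" for j using u_const c_def by simp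
  have vc: "v $ j = w" for j using v_const w_def by simp
  have bal: "c * \<phi> w = 1 / real CARD('k)" using balance[of i] c_def w_def by simp
  have pw: "\<phi> w \<noteq> 0" using bal by auto
  have K: "K = 1 / \<phi> w" using bal pw unfolding K_def by (simp add: field_simps)
  have xx: "x \<bullet> x = 1" using x_unit by (simp add: norm_eq_sqrt_inner)
  have xx': "(\<Sum>b\<in>UNIV. x $ b * x $ b) = 1" using xx by (simp add: inner_vec_def)
  have netf: "net \<phi> (\<chi> a j. x $ a * u $ j) (\<chi> j a. v $ j * x $ a)
      = (\<lambda>z. (K * \<phi> (w * (x \<bullet> z))) *\<^sub>R x)"
  proof
    fix z
    have "(\<chi> j a. v $ j * x $ a) *v z = (\<chi> j. w * (x \<bullet> z))"
      by (simp add: matrix_vector_mult_def vec_eq_iff vc inner_vec_def sum_distrib_left mult_ac)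
    then show "net \<phi> (\<chi> a j. x $ a * u $ j) (\<chi> j a. v $ j * x $ a) z = (K * \<phi> (w * (x \<bullet> z))) *\<^sub>R x"
      unfolding net_def
      by (simp add: matrix_vector_mult_def vec_eq_iff uc K_def mult_ac)
  qed
  define D where "D = K * deriv \<phi> w * w"
  have fd: "frechet_derivative (\<lambda>z. (K * \<phi> (w * (x \<bullet> z))) *\<^sub>R x) (at x)
      = (\<lambda>h. (K * (deriv \<phi> (w * (x \<bullet> x)) * (w * (x \<bullet> h)))) *\<^sub>R x)"
    using deriv_lemma[OF phi_diff, of K w x x] by (metis frechet_derivative_at)
  have jac: "jacobian (net \<phi> (\<chi> a j. x $ a * u $ j) (\<chi> j a. v $ j * x $ a)) (at x)
      = (\<chi> a b. D * x $ a * x $ b)"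
    unfolding jacobian_def netf fd matrix_def xx
    by (simp add: vec_eq_iff D_def inner_axis mult_ac)
  have "complex_of_real (deriv \<phi> (v $ i) * v $ i / \<phi> (v $ i)) = complex_of_real D"
    using K unfolding D_def w_def by simp
  then show "is_top_eigenvalue
              (jacobian (net \<phi> (\<chi> a j. x $ a * u $ j) (\<chi> j a. v $ j * x $ a)) (at x))
              (complex_of_real (deriv \<phi> (v $ i) * v $ i / \<phi> (v $ i)))"
    unfolding jac using rank1_top[OF xx'] by simp
qed

end
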